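(* Let $d>2$ be a prime integer, let $\mathcal{H}$ be a $d$-dimensional Hilbert space with orthonormal computational basis $\{|0\rangle,|1\rangle,\dots,|d-1\rangle\}$, and let $w=e^{2\pi i/d}$. Define the Chrestenson operator $$C_d=\frac{1}{\sqrt{d}}\sum_{x,y=0}^{d-1} w^{xy}\,|y\rangle\langle x|,$$ for $n,m\in\{0,1,\dots,d-1\}$ the Weyl operators $$U_{nm}=\sum_{k=0}^{d-1} w^{kn}\,|k\rangle\langle (k+m)\bmod d|,$$ and for $a,b\in\{0,1,\dots,d-1\}$ the Kronecker-Pauli operators $$\Pi_{ab}=\sum_{k=0}^{d-1} w^{(k-a)b}\,|k\rangle\langle (-k+2a)\bmod d|.$$ Then for every $n,m\in\{0,1,\dots,d-1\}$ there exist an integer $k\in\{0,1,\dots,d-1\}$ and a Kronecker-Pauli operator $\Pi$ from the family $\{\Pi_{ab} : a,b\in\{0,1,\dots,d-1\}\}$ (a family of $d^2$ operators) such that $$C_d\,U_{nm}\,C_d = w^{k}\,\Pi.$$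
   Context: Here $|j\rangle\langle j'|$ denotes the rank-one operator $v\mapsto \langle j',v\rangle |j\rangle$ on $\mathcal{H}$, and $x\bmod d$ denotes the representative of $x$ in $\{0,1,\dots,d-1\}$. In the paper the $d^2$ Kronecker-Pauli operators are enumerated as $\Pi_\ell$, $\ell\in\{1,\dots,d^2\}$; the statement above quantifies over this same family. *)

theory Defs
  imports Complex_Main "HOL-Computational_Algebra.Primes" "Jordan_Normal_Form.Matrix"
begin

text \<open>Operators on the d-dimensional Hilbert space are represented as d x d complex
  matrices w.r.t. the computational basis; the rank-one operator |j><j'| is the matrix
  unit with a 1 at row j, column j'.\<close>

definition omega :: "nat \<Rightarrow> complex" where
  "omega d = cis (2 * pi / real d)"

definition chrestenson :: "nat \<Rightarrow> complex mat" where
  "chrestenson d = mat d d (\<lambda>(y, x). omega d ^ (x * y) / complex_of_real (sqrt (real d)))"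

definition weyl :: "nat \<Rightarrow> nat \<Rightarrow> nat \<Rightarrow> complex mat" where
  "weyl d n m = mat d d (\<lambda>(i, j). if j = (i + m) mod d then omega d ^ (i * n) else 0)"

definition kron_pauli :: "nat \<Rightarrow> nat \<Rightarrow> nat \<Rightarrow> complex mat" where
  "kron_pauli d a b = mat d d (\<lambda>(i, j).
     if int j = (2 * int a - int i) mod int d
     then omega d powi ((int i - int a) * int b) else 0)"

end

theory Submission
  imports Defs "HOL-Library.Real_Mod"
begin

lemma w_pow_d: "d > 0 \<Longrightarrow> omega d ^ d = 1"
  unfolding omega_def by (simp add: DeMoivre)

lemma w_ne0: "omega d \<noteq> 0" unfolding omega_def by (metis cis_neq_zero)

lemma w_pow_mod: "d > 0 \<Longrightarrow> omega d ^ k = omega d ^ (k mod d)"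
proof -
  assume d: "d > 0"
  have "omega d ^ k = omega d ^ (d * (k div d) + k mod d)" by simp
  also have "\<dots> = (omega d ^ d) ^ (k div d) * omega d ^ (k mod d)"
    by (metis power_add power_mult)
  finally show ?thesis using w_pow_d[OF d] by simp
qed

lemma w_pow_cong: "d > 0 \<Longrightarrow> int x mod int d = int y mod int d \<Longrightarrow> omega d ^ x = omega d ^ y"
  by (metis w_pow_mod zmod_int of_nat_eq_iff)

lemma w_powi: "d > 0 \<Longrightarrow> omega d powi z = omega d ^ nat (z mod int d)"
proof -
  assume d: "d > 0"
  have "omega d powi z = omega d powi (z mod int d + int d * (z div int d))" by simp
  also have "\<dots> = omega d powi (z mod int d) * (omega d powi int d) powi (z div int d)"
    by (metis power_int_add power_int_mult w_ne0)
  also have "omega d powi int d = 1" using w_pow_d[OF d] by simp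
  also have "omega d powi (z mod int d) = omega d ^ nat (z mod int d)"
    using d by (simp add: power_int_def)
  finally show ?thesis by simp
qed

lemma w_ne1: "d > 0 \<Longrightarrow> \<not> d dvd t \<Longrightarrow> omega d ^ t \<noteq> 1"
proof
  assume d: "d > 0" and nd: "\<not> d dvd t" and e: "omega d ^ t = 1"
  have "cis (real t * (2 * pi / real d)) = 1" using e unfolding omega_def by (simp add: DeMoivre)
  then obtain n :: int where "real t * (2 * pi / real d) = of_int n * (2 * pi)"
    by (auto simp: cis_eq_1_iff)
  hence "real t = of_int n * real d" using d by (simp add: field_simps)
  hence "int t = n * int d" by (metis of_int_eq_iff of_int_mult of_int_of_nat_eq)
  hence "int d dvd int t" by simp
  thus False using nd by simp
qed

lemma w_sum: "d > 0 \<Longrightarrow> (\<Sum>i<d. omega d ^ (i * t)) = (if d dvd t then of_nat d else 0)"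
proof (cases "d dvd t")
  case True
  assume d: "d > 0"
  have "omega d ^ (i * t) = 1" for i
    using True w_pow_mod[OF d, of "i*t"] by simp
  thus ?thesis using True by simp
next
  case False
  assume d: "d > 0"
  have "(\<Sum>i<d. omega d ^ (i * t)) = (\<Sum>i<d. (omega d ^ t) ^ i)"
    by (intro sum.cong refl) (metis power_mult mult.commute)
  also have "\<dots> = ((omega d ^ t) ^ d - 1) / (omega d ^ t - 1)"
    using w_ne1[OF d False] by (simp add: geometric_sum)
  also have "(omega d ^ t) ^ d = 1"
    by (metis power_mult power_mult_distrib mult.commute w_pow_d[OF d] power_one)
  finally show ?thesis using False by simp
qed

lemma arith_A:
  fixes d n :: nat assumes "odd d" "n < d"
  shows "int d dvd 2 * int (((d - n) * ((d+1) div 2)) mod d) + int n"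
proof -
  define X where "X = (d - n) * ((d+1) div 2)"
  have h: "2 * ((d+1) div 2) = d + 1" using assms(1) by presburger
  have "int (X mod d) = int X - int d * (int X div int d)"
    by (simp add: zmod_int zdiv_int minus_div_mult_eq_mod[symmetric] algebra_simps)
  moreover have "2 * int X = (int d - int n) * (int d + 1)"
  proof -
    have "2 * X = (d - n) * (d + 1)" unfolding X_def using h by (metis mult.left_commute)
    hence "int (2 * X) = int ((d - n) * (d + 1))" by simp
    also have "\<dots> = (int d - int n) * (int d + 1)"
      unfolding of_nat_mult of_nat_add of_nat_diff[OF less_imp_le[OF assms(2)]] by simp
    finally show ?thesis by simp
  qed
  ultimately have "2 * int (X mod d) + int n = int d * (int d + 1 - int n - 2 * (int X div int d))"
    by (simp add: algebra_simps)
  thus ?thesis unfolding X_def by (metis dvd_triv_left)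
qed

lemma dims[simp]: "dim_row (chrestenson d) = d" "dim_col (chrestenson d) = d"
  "dim_row (weyl d n m) = d" "dim_col (weyl d n m) = d"
  "dim_row (kron_pauli d a b) = d" "dim_col (kron_pauli d a b) = d"
  by (simp_all add: chrestenson_def weyl_def kron_pauli_def)

lemma C_entry: "i < d \<Longrightarrow> j < d \<Longrightarrow> chrestenson d $$ (i, j) = omega d ^ (j * i) / complex_of_real (sqrt (real d))"
  by (simp add: chrestenson_def)

lemma UC_entry:
  assumes "i < d" "c < d"
  shows "(weyl d n m * chrestenson d) $$ (i, c) =
     omega d ^ (i * n) * (omega d ^ (((i + m) mod d) * c) / complex_of_real (sqrt (real d)))"
proof -
  have d: "d > 0" using assms by simp
  have "(weyl d n m * chrestenson d) $$ (i, c) =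
    (\<Sum>j\<in>{0..<d}. (if j = (i + m) mod d then omega d ^ (i * n) else 0) *
        (omega d ^ (c * j) / complex_of_real (sqrt (real d))))"
    using assms by (simp add: weyl_def chrestenson_def scalar_prod_def)
  also have "\<dots> = (\<Sum>j\<in>{0..<d}. if j = (i + m) mod d then omega d ^ (i * n) *
        (omega d ^ (c * j) / complex_of_real (sqrt (real d))) else 0)"
    by (intro sum.cong refl) auto
  also have "\<dots> = omega d ^ (i * n) * (omega d ^ (c * ((i + m) mod d)) / complex_of_real (sqrt (real d)))"
    using d by (simp add: sum.delta)
  finally show ?thesis by (simp add: mult.commute)
qed

lemma CUC_entry:
  assumes "r < d" "c < d"
  shows "(chrestenson d * (weyl d n m * chrestenson d)) $$ (r, c) =
     omega d ^ (m * c) * (if d dvd (r + n + c) then 1 else 0)"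
proof -
  have d: "d > 0" using assms by simp
  define s where "s = complex_of_real (sqrt (real d))"
  have ss0: "sqrt (real d) * sqrt (real d) = real d" by simp
  have ss: "s * s = of_nat d" unfolding s_def of_real_mult[symmetric] ss0 by simp
  have s0: "s \<noteq> 0" unfolding s_def using d by simp
  have "(chrestenson d * (weyl d n m * chrestenson d)) $$ (r, c) =
    (\<Sum>i\<in>{0..<d}. omega d ^ (i * r) / s * (omega d ^ (i * n) * (omega d ^ (((i + m) mod d) * c) / s)))"
  proof -
    have "(chrestenson d * (weyl d n m * chrestenson d)) $$ (r, c) =
       row (chrestenson d) r \<bullet> col (weyl d n m * chrestenson d) c"
      by (rule index_mult_mat(1)) (simp_all add: assms)
    also have "\<dots> = (\<Sum>i\<in>{0..<d}. chrestenson d $$ (r, i) * (weyl d n m * chrestenson d) $$ (i, c))"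
      unfolding scalar_prod_def using assms by (intro sum.cong) auto
    also have "\<dots> = (\<Sum>i\<in>{0..<d}. omega d ^ (i * r) / s * (omega d ^ (i * n) * (omega d ^ (((i + m) mod d) * c) / s)))"
      using assms by (intro sum.cong refl) (simp add: UC_entry C_entry s_def mult.commute del: index_mult_mat)
    finally show ?thesis .
  qed
  also have "\<dots> = (\<Sum>i\<in>{0..<d}. omega d ^ (m * c) * omega d ^ (i * (r + n + c)) / (s * s))"
  proof (intro sum.cong refl)
    fix i assume "i \<in> {0..<d}"
    have "omega d ^ (i * r) * omega d ^ (i * n) * omega d ^ (((i + m) mod d) * c)
       = omega d ^ (i * r + i * n + ((i + m) mod d) * c)" by (simp add: power_add)
    also have "\<dots> = omega d ^ (m * c + i * (r + n + c))"
    proof (rule w_pow_cong[OF d])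
      have "int ((i + m) mod d) = (int i + int m) mod int d" by (simp add: zmod_int)
      hence "int (i * r + i * n + ((i + m) mod d) * c) mod int d =
           (int i * int r + int i * int n + ((int i + int m) mod int d) * int c) mod int d"
        by simp
      also have "\<dots> = (int i * int r + int i * int n + (int i + int m) * int c) mod int d"
        by (metis mod_add_right_eq mod_mult_left_eq)
      finally show "int (i * r + i * n + ((i + m) mod d) * c) mod int d =
           int (m * c + i * (r + n + c)) mod int d" by (simp add: algebra_simps)
    qed
    also have "\<dots> = omega d ^ (m * c) * omega d ^ (i * (r + n + c))" by (simp add: power_add)
    finally show "omega d ^ (i * r) / s * (omega d ^ (i * n) * (omega d ^ (((i + m) mod d) * c) / s)) =
       omega d ^ (m * c) * omega d ^ (i * (r + n + c)) / (s * s)"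
      by (simp add: field_simps)
  qed
  also have "\<dots> = omega d ^ (m * c) * (\<Sum>i<d. omega d ^ (i * (r + n + c))) / (s * s)"
    by (simp add: sum_distrib_left sum_divide_distrib atLeast0LessThan)
  also have "\<dots> = omega d ^ (m * c) * (if d dvd (r + n + c) then 1 else 0)"
    using d by (simp add: w_sum ss)
  finally show ?thesis .
qed

lemma arith_B:
  fixes d a n r c :: nat
  assumes "c < d" and A: "int d dvd 2 * int a + int n"
  shows "(int c = (2 * int a - int r) mod int d) \<longleftrightarrow> d dvd (r + n + c)"
proof -
  obtain q where q: "2 * int a + int n = int d * q" using A by (auto elim: dvdE)
  have "(int c = (2 * int a - int r) mod int d) \<longleftrightarrow> int c mod int d = (2 * int a - int r) mod int d"
    using assms(1) by simp
  also have "\<dots> \<longleftrightarrow> int d dvd int c - (2 * int a - int r)" by (rule mod_eq_dvd_iff)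
  also have "int c - (2 * int a - int r) = (int r + int n + int c) + (- q) * int d"
    using q by (simp add: algebra_simps)
  also have "int d dvd (int r + int n + int c) + (- q) * int d \<longleftrightarrow> int d dvd int (r + n + c)"
    by (simp only: dvd_add_times_triv_right_iff of_nat_add)
  finally show ?thesis by (simp only: of_nat_dvd_iff)
qed

lemma int_mod_decomp: "int (x mod d) = int x - int d * int (x div d)"
proof -
  have "x = d * (x div d) + x mod d" by simp
  hence "int x = int d * int (x div d) + int (x mod d)" by (metis of_nat_add of_nat_mult)
  thus ?thesis by linarith
qed

lemma arith_C:
  fixes d a n r c m :: nat
  assumes d: "d > 0" and "m < d" and A: "int d dvd 2 * int a + int n" and D: "d dvd (r + n + c)"
  shows "omega d ^ (m * c) = omega d ^ ((a * m) mod d) * omega d powi ((int r - int a) * int ((d - m) mod d))"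
proof -
  define z where "z = (int r - int a) * int ((d - m) mod d)"
  obtain q5 where q5: "2 * int a + int n = int d * q5" using A by (auto elim: dvdE)
  obtain q4 where q4: "int r + int n + int c = int d * q4" using D
    by (metis dvdE of_nat_add of_nat_mult)
  define q1 where "q1 = int (a * m div d)"
  have h1: "int ((a * m) mod d) = int a * int m - int d * q1"
    unfolding q1_def using int_mod_decomp[of "a*m" d] by simp
  define q2 where "q2 = int ((d - m) div d)"
  have h2: "int ((d - m) mod d) = int d - int m - int d * q2"
    unfolding q2_def using int_mod_decomp[of "d-m" d] assms(2) by (simp add: of_nat_diff)
  define q3 where "q3 = z div int d"
  have h3: "int (nat (z mod int d)) = z - int d * q3"
  proof -
    have "z mod int d \<ge> 0" using d by simp
    hence "int (nat (z mod int d)) = z mod int d" by simp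
    thus ?thesis unfolding q3_def by (simp add: minus_mult_div_eq_mod)
  qed
  have "omega d ^ ((a * m) mod d) * omega d powi z = omega d ^ ((a * m) mod d + nat (z mod int d))"
    using d by (simp add: w_powi power_add)
  also have "\<dots> = omega d ^ (m * c)"
  proof (rule w_pow_cong[OF d])
    have e: "int (m * c) - int ((a * m) mod d + nat (z mod int d)) =
      int d * (int m * (q4 - q5) + q1 - (int r - int a) + (int r - int a) * q2 + q3)"
    proof -
      have c: "int c = int d * q4 - int r - int n" using q4 by linarith
      have n: "int n = int d * q5 - 2 * int a" using q5 by linarith
      show ?thesis unfolding of_nat_add h1 h3 of_nat_mult unfolding z_def h2 c unfolding n
        by (simp add: algebra_simps)
    qed
    show "int ((a * m) mod d + nat (z mod int d)) mod int d = int (m * c) mod int d"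
      by (metis e mod_eq_dvd_iff dvd_triv_left)
  qed
  finally show ?thesis unfolding z_def by simp
qed

theorem mainTheorem1:
  fixes d n m :: nat
  assumes "prime d" and "d > 2" and "n < d" and "m < d"
  shows "\<exists>k < d. \<exists>a < d. \<exists>b < d.
           chrestenson d * weyl d n m * chrestenson d = omega d ^ k \<cdot>\<^sub>m kron_pauli d a b"
proof -
  have d: "d > 0" using assms by simp
  have odd: "odd d" using prime_odd_nat assms by blast
  define a where "a = ((d - n) * ((d+1) div 2)) mod d"
  define b where "b = (d - m) mod d"
  define k where "k = (a * m) mod d"
  have A: "int d dvd 2 * int a + int n" unfolding a_def using arith_A[OF odd assms(3)] .
  have lt: "a < d" "b < d" "k < d" unfolding a_def b_def k_def using d by simp_all
  have Cc: "chrestenson d \<in> carrier_mat d d" and Uc: "weyl d n m \<in> carrier_mat d d"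
    by (rule carrier_matI, simp, simp)+
  have assoc: "chrestenson d * weyl d n m * chrestenson d = chrestenson d * (weyl d n m * chrestenson d)"
    using assoc_mult_mat[OF Cc Uc Cc] .
  have "chrestenson d * weyl d n m * chrestenson d = omega d ^ k \<cdot>\<^sub>m kron_pauli d a b"
  proof (rule eq_matI)
    fix r c assume r: "r < dim_row (omega d ^ k \<cdot>\<^sub>m kron_pauli d a b)"
      and c: "c < dim_col (omega d ^ k \<cdot>\<^sub>m kron_pauli d a b)"
    hence r: "r < d" and c: "c < d" by simp_all
    have R: "(omega d ^ k \<cdot>\<^sub>m kron_pauli d a b) $$ (r, c) = omega d ^ k *
       (if int c = (2 * int a - int r) mod int d then omega d powi ((int r - int a) * int b) else 0)"
    proof -
      have "(omega d ^ k \<cdot>\<^sub>m kron_pauli d a b) $$ (r, c) = omega d ^ k * kron_pauli d a b $$ (r, c)"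
        by (rule index_smult_mat(1)) (simp_all add: r c)
      also have "kron_pauli d a b $$ (r, c) = (if int c = (2 * int a - int r) mod int d
          then omega d powi ((int r - int a) * int b) else 0)"
        unfolding kron_pauli_def using r c by (simp only: index_mat(1) prod.case)
      finally show ?thesis .
    qed
    show "(chrestenson d * weyl d n m * chrestenson d) $$ (r, c) = (omega d ^ k \<cdot>\<^sub>m kron_pauli d a b) $$ (r, c)"
    proof (cases "d dvd (r + n + c)")
      case True
      have e: "omega d ^ (m * c) = omega d ^ k * omega d powi ((int r - int a) * int b)"
        unfolding k_def b_def by (rule arith_C[OF d assms(4) A True])
      show ?thesis unfolding assoc R CUC_entry[OF r c] arith_B[OF c A] using True e
        by (simp only: if_True mult_1_right)
    next
      case False
      show ?thesis unfolding assoc R CUC_entry[OF r c] arith_B[OF c A] using False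
        by (simp only: if_False mult_zero_right)
    qed
  next
    show "dim_row (chrestenson d * weyl d n m * chrestenson d) = dim_row (omega d ^ k \<cdot>\<^sub>m kron_pauli d a b)"
      by simp
    show "dim_col (chrestenson d * weyl d n m * chrestenson d) = dim_col (omega d ^ k \<cdot>\<^sub>m kron_pauli d a b)"
      by simp
  qed
  thus ?thesis using lt by blast
qed

end
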